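(* Let $n\ge1$, $0<\epsilon\le1$, $0\le\tau<1$, and let $G=(V,E)$ be a comparison graph. Let $P$ be a distribution on $[n]$ with $\|P-U_n\|\ge\epsilon$ and $|E|(\mu_P-\mu_P^2)\ge c(G)(\gamma_P-\mu_P^2)$. If $|E|\ge\dfrac{16n}{(1-\tau)^2\epsilon^4}$, then the collision-based algorithm $(G,\tau)$ outputs YES on $P$ with probability at most $1/4$.
   Context: $U_n$ is the uniform distribution on $[n]$; $\|P-Q\|=\sum_i|P_i-Q_i|$. $\mu_P=\sum_iP_i^2$, $\gamma_P=\sum_iP_i^3$. A comparison graph is a finite simple undirected graph $G=(V,E)$; $c(G)$ is the number of ordered triples $(u,v,w)$ of distinct vertices with $\{u,v\},\{v,w\}\in E$. Given $P$, each vertex $v$ receives an independent sample $S(v)\sim P$; for $e=\{u,v\}\in E$, $\mathbf 1_e=\mathbf 1[S(u)=S(v)]$; $Z=\sum_{e\in E}\mathbf 1_e$ and $T=|E|\frac{1+\tau\epsilon^2}{n}$; the algorithm $(G,\tau)$ outputs YES if $Z<T$ and NO otherwise. *)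

theory Defs
  imports "HOL-Probability.Probability"
begin

definition comparison_graph :: "'v set \<Rightarrow> 'v set set \<Rightarrow> bool" where
  "comparison_graph V E \<longleftrightarrow> finite V \<and> (\<forall>e\<in>E. e \<subseteq> V \<and> card e = 2)"

definition cG :: "'v set \<Rightarrow> 'v set set \<Rightarrow> nat" where
  "cG V E = card {(u,v,w). u \<in> V \<and> v \<in> V \<and> w \<in> V \<and> u \<noteq> v \<and> v \<noteq> w \<and> u \<noteq> w
                  \<and> {u,v} \<in> E \<and> {v,w} \<in> E}"

text \<open>Distribution on [n] = {1..n}, given as a pmf supported in {1..n}.\<close>
definition l1_to_uniform :: "nat \<Rightarrow> nat pmf \<Rightarrow> real" where
  "l1_to_uniform n P = (\<Sum>i\<in>{1..n}. \<bar>pmf P i - 1 / real n\<bar>)"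

definition muP :: "nat \<Rightarrow> nat pmf \<Rightarrow> real" where
  "muP n P = (\<Sum>i\<in>{1..n}. pmf P i ^ 2)"

definition gammaP :: "nat \<Rightarrow> nat pmf \<Rightarrow> real" where
  "gammaP n P = (\<Sum>i\<in>{1..n}. pmf P i ^ 3)"

definition collisions :: "'v set set \<Rightarrow> ('v \<Rightarrow> nat) \<Rightarrow> nat" where
  "collisions E S = card {e \<in> E. \<exists>u v. e = {u, v} \<and> S u = S v}"

definition threshold :: "'v set set \<Rightarrow> nat \<Rightarrow> real \<Rightarrow> real \<Rightarrow> real" where
  "threshold E n \<tau> \<epsilon> = real (card E) * (1 + \<tau> * \<epsilon>^2) / real n"

definition prob_yes :: "'v set \<Rightarrow> 'v set set \<Rightarrow> nat \<Rightarrow> real \<Rightarrow> real \<Rightarrow> nat pmf \<Rightarrow> real" where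
  "prob_yes V E n \<tau> \<epsilon> P =
     measure_pmf.prob (Pi_pmf V 0 (\<lambda>_. P))
       {S. real (collisions E S) < threshold E n \<tau> \<epsilon>}"

end

theory Submission
  imports Defs
begin

lemma prod_of_bool_real:
  assumes "finite V"
  shows "(\<Prod>a\<in>V. (if a \<in> W then of_bool (S a = c a) else 1::real)) = of_bool (\<forall>a\<in>W\<inter>V. S a = c a)"
proof (cases "\<forall>a\<in>W\<inter>V. S a = c a")
  case True thus ?thesis by (intro prod.neutral[THEN trans]) auto
next
  case False
  then obtain a where "a \<in> W" "a \<in> V" "S a \<noteq> c a" by auto
  thus ?thesis using assms False by (subst prod_zero) auto
qed

lemma GA:
  assumes V: "finite V" and W: "W \<subseteq> V" and fin: "finite (set_pmf P)"
  shows "measure_pmf.expectation (Pi_pmf V 0 (\<lambda>_. P)) (\<lambda>S. of_bool (\<forall>a\<in>W. S a = c a)::real)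
         = (\<Prod>a\<in>W. pmf P (c a))"
proof -
  define f where "f = (\<lambda>a v. if a \<in> W then of_bool (v = c a) else (1::real))"
  have eq: "(\<lambda>S. of_bool (\<forall>a\<in>W. S a = c a)::real) = (\<lambda>S. \<Prod>a\<in>V. f a (S a))"
    unfolding f_def
    by (intro ext) (rule prod_of_bool_real[OF V, of W, unfolded Int_absorb2[OF W], symmetric])
  have "measure_pmf.expectation (Pi_pmf V 0 (\<lambda>_. P)) (\<lambda>S. of_bool (\<forall>a\<in>W. S a = c a)::real) = (\<Prod>a\<in>V. measure_pmf.expectation P (f a))"
    unfolding eq by (rule expectation_prod_Pi_pmf[OF V]) (auto simp: f_def intro: integrable_measure_pmf_finite[OF fin])
  also have "\<dots> = (\<Prod>a\<in>V. if a \<in> W then pmf P (c a) else 1)"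
  proof (rule prod.cong[OF refl])
    fix a
    have "(\<lambda>v. of_bool (v = c a)::real) = indicator {c a}" by (auto simp: indicator_def)
    thus "measure_pmf.expectation P (f a) = (if a \<in> W then pmf P (c a) else 1)"
      by (auto simp: f_def measure_pmf_single)
  qed
  also have "\<dots> = (\<Prod>a\<in>W. pmf P (c a))"
    using V W by (simp add: prod.If_cases Int_absorb1 Int_absorb2)
  finally show ?thesis .
qed


lemma int_Pi:
  assumes "finite V" "finite (set_pmf P)"
  shows "integrable (measure_pmf (Pi_pmf V 0 (\<lambda>_. P))) (g :: _ \<Rightarrow> real)"
  by (rule integrable_measure_pmf_finite) (use assms in \<open>auto simp: set_Pi_pmf\<close>)

definition Xe :: "nat \<Rightarrow> 'v set \<Rightarrow> ('v \<Rightarrow> nat) \<Rightarrow> real" where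
  "Xe n e S = (\<Sum>i\<in>{1..n}. of_bool (\<forall>a\<in>e. S a = i))"

lemma Xe_at:
  assumes "c \<in> e"
  shows "Xe n e S = of_bool (S c \<in> {1..n} \<and> (\<forall>a\<in>e. S a = S c))"
proof -
  have "Xe n e S = (\<Sum>i\<in>{1..n}. if S c = i then of_bool (\<forall>a\<in>e. S a = S c) else 0)"
    unfolding Xe_def
  proof (intro sum.cong refl)
    fix i
    show "(of_bool (\<forall>a\<in>e. S a = i)::real) = (if S c = i then of_bool (\<forall>a\<in>e. S a = S c) else 0)"
      using assms by (cases "S c = i") auto
  qed
  also have "\<dots> = of_bool (S c \<in> {1..n} \<and> (\<forall>a\<in>e. S a = S c))"
    by (subst sum.delta') auto
  finally show ?thesis .
qed

lemma Xe_mult_int: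
  assumes "c \<in> e" "c \<in> f"
  shows "Xe n e S * Xe n f S = Xe n (e \<union> f) S"
proof -
  have "(\<forall>a\<in>e\<union>f. S a = S c) \<longleftrightarrow> (\<forall>a\<in>e. S a = S c) \<and> (\<forall>a\<in>f. S a = S c)" by blast
  moreover have "Xe n (e \<union> f) S = of_bool (S c \<in> {1..n} \<and> (\<forall>a\<in>e \<union> f. S a = S c))"
    by (rule Xe_at) (use assms in blast)
  ultimately show ?thesis
    unfolding Xe_at[OF assms(1), of n S] Xe_at[OF assms(2), of n S]
    by simp
qed

lemma Xe_mult_disj:
  assumes "e \<inter> f = {}"
  shows "Xe n e S * Xe n f S =
    (\<Sum>i\<in>{1..n}. \<Sum>j\<in>{1..n}. of_bool (\<forall>a\<in>e \<union> f. S a = (if a \<in> e then i else j)))"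
  unfolding Xe_def sum_product
proof (intro sum.cong refl)
  fix i j
  have "(\<forall>a\<in>e \<union> f. S a = (if a \<in> e then i else j)) \<longleftrightarrow> (\<forall>a\<in>e. S a = i) \<and> (\<forall>a\<in>f. S a = j)"
  proof
    assume h: "\<forall>a\<in>e \<union> f. S a = (if a \<in> e then i else j)"
    show "(\<forall>a\<in>e. S a = i) \<and> (\<forall>a\<in>f. S a = j)"
    proof (intro conjI ballI)
      fix a assume "a \<in> e" thus "S a = i" using h by auto
    next
      fix a assume "a \<in> f" hence "a \<notin> e" using assms by blast
      thus "S a = j" using h \<open>a \<in> f\<close> by auto
    qed
  next
    assume h: "(\<forall>a\<in>e. S a = i) \<and> (\<forall>a\<in>f. S a = j)"
    show "\<forall>a\<in>e \<union> f. S a = (if a \<in> e then i else j)"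
    proof
      fix a assume "a \<in> e \<union> f" thus "S a = (if a \<in> e then i else j)" using h by (cases "a \<in> e") auto
    qed
  qed
  thus "of_bool (\<forall>a\<in>e. S a = i) * of_bool (\<forall>a\<in>f. S a = j) =
        (of_bool (\<forall>a\<in>e \<union> f. S a = (if a \<in> e then i else j)) :: real)"
    by simp
qed

lemma EX:
  assumes V: "finite V" and e: "e \<subseteq> V" and fin: "finite (set_pmf P)"
  shows "measure_pmf.expectation (Pi_pmf V 0 (\<lambda>_. P)) (Xe n e) = (\<Sum>i\<in>{1..n}. pmf P i ^ card e)"
proof -
  have "measure_pmf.expectation (Pi_pmf V 0 (\<lambda>_. P)) (Xe n e)
      = (\<Sum>i\<in>{1..n}. measure_pmf.expectation (Pi_pmf V 0 (\<lambda>_. P)) (\<lambda>S. of_bool (\<forall>a\<in>e. S a = i)))"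
    unfolding Xe_def
    by (rule Bochner_Integration.integral_sum) (simp add: int_Pi[OF V fin])
  also have "\<dots> = (\<Sum>i\<in>{1..n}. pmf P i ^ card e)"
    using GA[OF V e fin, of "\<lambda>_. i" for i] by simp
  finally show ?thesis .
qed

lemma EXX_disj:
  assumes V: "finite V" and e: "e \<subseteq> V" and f: "f \<subseteq> V" and d: "e \<inter> f = {}" and fin: "finite (set_pmf P)"
  shows "measure_pmf.expectation (Pi_pmf V 0 (\<lambda>_. P)) (\<lambda>S. Xe n e S * Xe n f S)
       = (\<Sum>i\<in>{1..n}. pmf P i ^ card e) * (\<Sum>i\<in>{1..n}. pmf P i ^ card f)"
proof -
  have fe: "finite e" "finite f" using V e f finite_subset by auto
  have int: "integrable (measure_pmf (Pi_pmf V 0 (\<lambda>_. P))) g" for g :: "_ \<Rightarrow> real"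
    by (simp add: int_Pi[OF V fin])
  have "measure_pmf.expectation (Pi_pmf V 0 (\<lambda>_. P)) (\<lambda>S. Xe n e S * Xe n f S)
      = (\<Sum>i\<in>{1..n}. \<Sum>j\<in>{1..n}. measure_pmf.expectation (Pi_pmf V 0 (\<lambda>_. P))
            (\<lambda>S. of_bool (\<forall>a\<in>e \<union> f. S a = (if a \<in> e then i else j))))"
    unfolding Xe_mult_disj[OF d]
    by (subst Bochner_Integration.integral_sum, simp add: int,
        intro sum.cong refl, subst Bochner_Integration.integral_sum, simp_all add: int)
  also have "\<dots> = (\<Sum>i\<in>{1..n}. \<Sum>j\<in>{1..n}. pmf P i ^ card e * pmf P j ^ card f)"
  proof (intro sum.cong refl)
    fix i j
    have "measure_pmf.expectation (Pi_pmf V 0 (\<lambda>_. P))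
            (\<lambda>S. of_bool (\<forall>a\<in>e \<union> f. S a = (if a \<in> e then i else j)))
          = (\<Prod>a\<in>e \<union> f. pmf P (if a \<in> e then i else j))"
      using e f by (intro GA[OF V _ fin]) auto
    also have "\<dots> = (\<Prod>a\<in>e. pmf P (if a \<in> e then i else j)) * (\<Prod>a\<in>f. pmf P (if a \<in> e then i else j))"
      using fe d by (rule prod.union_disjoint)
    also have "\<dots> = pmf P i ^ card e * pmf P j ^ card f"
    proof -
      have "(\<Prod>a\<in>e. pmf P (if a \<in> e then i else j)) = (\<Prod>a\<in>e. pmf P i)"
        by (rule prod.cong) auto
      moreover have "(\<Prod>a\<in>f. pmf P (if a \<in> e then i else j)) = (\<Prod>a\<in>f. pmf P j)"
        using d by (intro prod.cong) auto
      ultimately show ?thesis by simp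
    qed
    finally show "measure_pmf.expectation (Pi_pmf V 0 (\<lambda>_. P))
            (\<lambda>S. of_bool (\<forall>a\<in>e \<union> f. S a = (if a \<in> e then i else j))) = pmf P i ^ card e * pmf P j ^ card f" .
  qed
  also have "\<dots> = (\<Sum>i\<in>{1..n}. pmf P i ^ card e) * (\<Sum>i\<in>{1..n}. pmf P i ^ card f)"
    by (simp add: sum_product)
  finally show ?thesis .
qed


lemma EXX_int:
  assumes V: "finite V" and e: "e \<subseteq> V" and f: "f \<subseteq> V" and c: "c \<in> e" "c \<in> f" and fin: "finite (set_pmf P)"
  shows "measure_pmf.expectation (Pi_pmf V 0 (\<lambda>_. P)) (\<lambda>S. Xe n e S * Xe n f S)
       = (\<Sum>i\<in>{1..n}. pmf P i ^ card (e \<union> f))"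
  unfolding Xe_mult_int[OF c] using EX[OF V _ fin, of "e \<union> f"] e f by simp

lemma mu_bound:
  fixes p :: "nat \<Rightarrow> real"
  assumes n: "n \<ge> 1" and s1: "(\<Sum>i\<in>{1..n}. p i) = 1" and eps: "(\<Sum>i\<in>{1..n}. \<bar>p i - 1 / real n\<bar>) \<ge> \<epsilon>" "\<epsilon> > 0"
  shows "(\<Sum>i\<in>{1..n}. p i ^ 2) - 1 / real n \<ge> \<epsilon>^2 / real n"
proof -
  have cs: "(\<Sum>i\<in>{1..n}. \<bar>p i - 1 / real n\<bar> * 1)\<^sup>2 \<le> (\<Sum>i\<in>{1..n}. (\<bar>p i - 1 / real n\<bar>)\<^sup>2) * (\<Sum>i\<in>{1..n}. 1\<^sup>2)"
    by (rule Cauchy_Schwarz_ineq_sum)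
  have "(\<Sum>i\<in>{1..n}. (\<bar>p i - 1 / real n\<bar>)\<^sup>2) = (\<Sum>i\<in>{1..n}. p i ^ 2 - 2 / real n * p i + 1 / real n ^ 2)"
    by (intro sum.cong refl) (simp add: power2_eq_square algebra_simps)
  also have "\<dots> = (\<Sum>i\<in>{1..n}. p i ^ 2) - 2 / real n * (\<Sum>i\<in>{1..n}. p i) + real n / real n ^ 2"
    by (simp add: sum.distrib sum_subtractf sum_distrib_left)
  also have "\<dots> = (\<Sum>i\<in>{1..n}. p i ^ 2) - 1 / real n"
    using n s1 by (simp add: power2_eq_square field_simps)
  finally have q: "(\<Sum>i\<in>{1..n}. \<bar>p i - 1 / real n\<bar>)\<^sup>2 \<le> ((\<Sum>i\<in>{1..n}. p i ^ 2) - 1 / real n) * real n"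
    using cs by simp
  have "\<epsilon>^2 \<le> (\<Sum>i\<in>{1..n}. \<bar>p i - 1 / real n\<bar>)\<^sup>2"
    using eps by (intro power_mono) auto
  hence "\<epsilon>^2 \<le> ((\<Sum>i\<in>{1..n}. p i ^ 2) - 1 / real n) * real n" using q by linarith
  thus ?thesis using n by (simp add: pos_divide_le_eq)
qed

lemma gamma_bound:
  fixes p :: "nat \<Rightarrow> real"
  assumes s1: "(\<Sum>i\<in>A. p i) = 1" and nn: "\<And>i. p i \<ge> 0"
  shows "(\<Sum>i\<in>A. p i ^ 2)^2 \<le> (\<Sum>i\<in>A. p i ^ 3)"
proof -
  have "(\<Sum>i\<in>A. (p i * sqrt (p i)) * sqrt (p i))\<^sup>2 \<le> (\<Sum>i\<in>A. (p i * sqrt (p i))\<^sup>2) * (\<Sum>i\<in>A. (sqrt (p i))\<^sup>2)"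
    by (rule Cauchy_Schwarz_ineq_sum)
  moreover have "(p i * sqrt (p i)) * sqrt (p i) = p i ^ 2" for i using nn[of i] by (simp add: power2_eq_square)
  moreover have "(p i * sqrt (p i))\<^sup>2 = p i ^ 3" for i using nn[of i] by (simp add: power2_eq_square power3_eq_cube power_mult_distrib)
  moreover have "(sqrt (p i))\<^sup>2 = p i" for i using nn[of i] by simp
  ultimately show ?thesis using s1 by simp
qed

lemma final_num:
  fixes E n \<mu> \<delta> \<epsilon> \<tau> :: real
  assumes n: "n \<ge> 1" and eps: "0 < \<epsilon>" "\<epsilon> \<le> 1" and tau: "\<tau> < 1"
    and d: "\<delta> \<ge> \<epsilon>^2 / n" and mu: "\<mu> = 1/n + \<delta>"
    and E: "E \<ge> 16 * n / ((1 - \<tau>)^2 * \<epsilon>^4)"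
  shows "2 * E * \<mu> / (E * (1 - \<tau>) * \<delta>)^2 \<le> 1/4"
proof -
  define y where "y = \<delta> / \<epsilon>^2"
  have e2: "\<epsilon>^2 > 0" "\<epsilon>^2 \<le> 1" using eps by (auto simp: power_le_one)
  have y: "y \<ge> 1 / n" using d e2 unfolding y_def by (simp add: field_simps)
  have ny: "n * y \<ge> 1" using y n by (simp add: field_simps)
  have ypos: "y > 0" using y n by (smt (verit) divide_pos_pos)
  have "8 * n * y^2 \<ge> 8 * y" using ny ypos by (simp add: power2_eq_square)
  moreover have "8 * y \<ge> 8 * y * \<epsilon>^2" using ypos e2 by (simp add: mult_le_cancel_left1)
  moreover have "8 * y \<ge> 8 / n" using y by simp
  ultimately have key: "16 * n * y^2 \<ge> 8 / n + 8 * y * \<epsilon>^2" by linarith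
  have dd: "\<delta> = y * \<epsilon>^2" using e2 unfolding y_def by simp
  have t: "(1 - \<tau>)^2 > 0" using tau by simp
  have Epos: "E > 0" using E t eps n by (smt (verit) divide_pos_pos mult_pos_pos zero_less_power)
  have "16 * n / \<epsilon>^4 = (16 * n / ((1 - \<tau>)^2 * \<epsilon>^4)) * (1 - \<tau>)^2" using t eps by (simp add: field_simps)
  also have "\<dots> \<le> E * (1 - \<tau>)^2" using E t by (intro mult_right_mono) auto
  finally have "E * (1 - \<tau>)^2 \<ge> 16 * n / \<epsilon>^4" .
  hence "E * (1 - \<tau>)^2 * \<delta>^2 \<ge> 16 * n / \<epsilon>^4 * \<delta>^2" by (intro mult_right_mono) auto
  also have "16 * n / \<epsilon>^4 * \<delta>^2 = 16 * n * y^2" unfolding dd using eps by (simp add: field_simps power2_eq_square eval_nat_numeral)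
  finally have A: "E * (1 - \<tau>)^2 * \<delta>^2 \<ge> 8 * \<mu>" using key mu dd by simp
  have dpos: "\<delta> > 0" using dd ypos e2 by simp
  define X where "X = E * (1 - \<tau>)^2 * \<delta>^2"
  have Xpos: "X > 0" unfolding X_def using Epos t dpos by simp
  have "(E * (1 - \<tau>) * \<delta>)^2 = E * X" unfolding X_def by (simp add: power_mult_distrib power2_eq_square)
  hence "2 * E * \<mu> / (E * (1 - \<tau>) * \<delta>)^2 = 2 * \<mu> / X" using Epos by simp
  also have "\<dots> \<le> 1/4" using A Xpos unfolding X_def[symmetric] by (simp add: pos_divide_le_eq)
  finally show ?thesis .
qed


lemma card_union3:
  assumes "card e = 2" "card f = 2" "e \<noteq> f" "e \<inter> f \<noteq> {}"
  shows "card (e \<union> f) = 3"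
proof -
  have fin: "finite e" "finite f" using assms by (auto intro: card_ge_0_finite)
  have c1: "card (e \<inter> f) \<ge> 1" using assms fin by (simp add: Suc_le_eq card_gt_0_iff)
  have c2: "card (e \<inter> f) \<le> 2" using assms fin by (metis card_mono inf_le1)
  have "card (e \<inter> f) \<noteq> 2"
  proof
    assume h: "card (e \<inter> f) = 2"
    have "e \<inter> f = e" using h assms fin by (intro card_subset_eq) auto
    moreover have "e \<inter> f = f" using h assms fin by (intro card_subset_eq) auto
    ultimately show False using assms by auto
  qed
  hence "card (e \<inter> f) = 1" using c1 c2 by linarith
  thus ?thesis using card_Un_Int[OF fin] assms by simp
qed

lemma pairs_le_cG:
  assumes G: "comparison_graph V E"
  shows "card {(e, f). e \<in> E \<and> f \<in> E \<and> e \<noteq> f \<and> e \<inter> f \<noteq> {}} \<le> cG V E"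
proof -
  define Tr where "Tr = {(u,v,w). u \<in> V \<and> v \<in> V \<and> w \<in> V \<and> u \<noteq> v \<and> v \<noteq> w \<and> u \<noteq> w
                  \<and> {u,v} \<in> E \<and> {v,w} \<in> E}"
  have fV: "finite V" using G by (simp add: comparison_graph_def)
  have fT: "finite Tr" by (rule finite_subset[of _ "V \<times> V \<times> V"]) (auto simp: Tr_def fV)
  have "{(e, f). e \<in> E \<and> f \<in> E \<and> e \<noteq> f \<and> e \<inter> f \<noteq> {}} \<subseteq> (\<lambda>(u,v,w). ({u,v},{v,w})) ` Tr"
  proof
    fix pr assume "pr \<in> {(e, f). e \<in> E \<and> f \<in> E \<and> e \<noteq> f \<and> e \<inter> f \<noteq> {}}"
    then obtain e f x where pr: "pr = (e, f)" and e: "e \<in> E" and f: "f \<in> E" and ne: "e \<noteq> f"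
      and x: "x \<in> e" "x \<in> f" by blast
    have ce: "card e = 2" "e \<subseteq> V" and cf: "card f = 2" "f \<subseteq> V" using G e f by (auto simp: comparison_graph_def)
    have other: "\<exists>u. g = {x, u} \<and> u \<noteq> x" if "card g = 2" "x \<in> g" for g
    proof -
      obtain a b where ab: "g = {a, b}" "a \<noteq> b" using \<open>card g = 2\<close> unfolding card_2_iff by blast
      show ?thesis
      proof (cases "x = a")
        case True thus ?thesis using ab by auto
      next
        case False hence "x = b" using ab \<open>x \<in> g\<close> by auto
        thus ?thesis using ab by (intro exI[of _ a]) auto
      qed
    qed
    obtain u where u: "e = {x, u}" "u \<noteq> x" using other[OF ce(1) x(1)] by blast
    obtain w where w: "f = {x, w}" "w \<noteq> x" using other[OF cf(1) x(2)] by blast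
    have "u \<noteq> w" using u w ne by auto
    hence "(u, x, w) \<in> Tr" using u w e f ce cf unfolding Tr_def by (auto simp: insert_commute)
    moreover have "(e, f) = (\<lambda>(u,v,w). ({u,v},{v,w})) (u, x, w)" using u w by (auto simp: insert_commute)
    ultimately show "pr \<in> (\<lambda>(u,v,w). ({u,v},{v,w})) ` Tr" unfolding pr by blast
  qed
  hence "card {(e, f). e \<in> E \<and> f \<in> E \<and> e \<noteq> f \<and> e \<inter> f \<noteq> {}} \<le> card ((\<lambda>(u,v,w). ({u,v},{v,w})) ` Tr)"
    using fT by (intro card_mono) auto
  also have "\<dots> \<le> card Tr" using fT by (rule card_image_le)
  finally show ?thesis unfolding cG_def Tr_def .
qed

theorem lemma10:
  fixes V :: "'v set" and E :: "'v set set" and n :: nat and \<epsilon> \<tau> :: real and P :: "nat pmf"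
  assumes "n \<ge> 1" and "0 < \<epsilon>" and "\<epsilon> \<le> 1" and "0 \<le> \<tau>" and "\<tau> < 1"
    and "comparison_graph V E"
    and "set_pmf P \<subseteq> {1..n}"
    and "l1_to_uniform n P \<ge> \<epsilon>"
    and "real (card E) * (muP n P - (muP n P)^2) \<ge> real (cG V E) * (gammaP n P - (muP n P)^2)"
    and "real (card E) \<ge> 16 * real n / ((1 - \<tau>)^2 * \<epsilon>^4)"
  shows "prob_yes V E n \<tau> \<epsilon> P \<le> 1/4"
proof -
  have fV: "finite V" and Eprop: "\<And>e. e \<in> E \<Longrightarrow> e \<subseteq> V \<and> card e = 2"
    using assms(6) by (auto simp: comparison_graph_def)
  have fE: "finite E" using Eprop fV by (intro finite_subset[of E "Pow V"]) auto
  have finP: "finite (set_pmf P)" using assms(7) finite_subset by blast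
  define M where "M = Pi_pmf V 0 (\<lambda>_. P)"
  define \<mu> where "\<mu> = muP n P"
  define \<gamma> where "\<gamma> = gammaP n P"
  have sum1: "(\<Sum>i\<in>{1..n}. pmf P i) = 1" using sum_pmf_eq_1[OF _ assms(7)] by simp
  have supp: "S a \<in> {1..n}" if "S \<in> set_pmf M" "a \<in> V" for S a
    using that set_Pi_pmf[OF fV, of 0 "\<lambda>_. P"] assms(7) unfolding M_def by (auto simp: PiE_dflt_def)
  define Z where "Z = (\<lambda>S. \<Sum>e\<in>E. Xe n e S)"
  have coll: "real (collisions E S) = Z S" if S: "S \<in> set_pmf M" for S
  proof -
    have "Xe n e S = of_bool (\<exists>u v. e = {u,v} \<and> S u = S v)" if e: "e \<in> E" for e
    proof -
      obtain u v where uv: "e = {u,v}" "u \<noteq> v" using Eprop[OF e] card_2_iff by metis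
      have "S u \<in> {1..n}" using supp[OF S] Eprop[OF e] uv by auto
      hence "Xe n e S = of_bool (S u = S v)" using Xe_at[of u e n S] uv by auto
      also have "(S u = S v) = (\<exists>u' v'. e = {u',v'} \<and> S u' = S v')" using uv by (auto simp: doubleton_eq_iff)
      finally show ?thesis .
    qed
    hence "Z S = (\<Sum>e\<in>E. of_bool (\<exists>u v. e = {u,v} \<and> S u = S v))" unfolding Z_def by (intro sum.cong) auto
    also have "\<dots> = real (card (E \<inter> {e. \<exists>u v. e = {u,v} \<and> S u = S v}))" using fE by simp
    also have "E \<inter> {e. \<exists>u v. e = {u,v} \<and> S u = S v} = {e \<in> E. \<exists>u v. e = {u, v} \<and> S u = S v}" by blast
    finally show ?thesis unfolding collisions_def by simp
  qed
  have int: "integrable (measure_pmf M) g" for g :: "_ \<Rightarrow> real"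
    unfolding M_def by (rule int_Pi[OF fV finP])
  have EXe: "measure_pmf.expectation M (Xe n e) = \<mu>" if "e \<in> E" for e
    using EX[OF fV _ finP, of e n] Eprop[OF that] unfolding M_def \<mu>_def muP_def by simp
  have EZ: "measure_pmf.expectation M Z = real (card E) * \<mu>"
  proof -
    have "measure_pmf.expectation M Z = (\<Sum>e\<in>E. measure_pmf.expectation M (Xe n e))"
      unfolding Z_def by (rule Bochner_Integration.integral_sum) (simp add: int)
    also have "\<dots> = (\<Sum>e\<in>E. \<mu>)" by (intro sum.cong) (auto simp: EXe)
    finally show ?thesis by simp
  qed
  define Pairs where "Pairs = {(e, f). e \<in> E \<and> f \<in> E \<and> e \<noteq> f \<and> e \<inter> f \<noteq> {}}"
  have EXX: "measure_pmf.expectation M (\<lambda>S. Xe n e S * Xe n f S)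
      = of_bool (e = f) * (\<mu> - \<mu>^2) + of_bool ((e,f) \<in> Pairs) * (\<gamma> - \<mu>^2) + \<mu>^2"
    if e: "e \<in> E" and f: "f \<in> E" for e f
  proof -
    have ce: "card e = 2" "e \<subseteq> V" and cf: "card f = 2" "f \<subseteq> V" using Eprop e f by auto
    show ?thesis
    proof (cases "e \<inter> f = {}")
      case True
      hence "e \<noteq> f" using ce by auto
      thus ?thesis using True EXX_disj[OF fV ce(2) cf(2) True finP, of n] ce cf
        unfolding M_def Pairs_def \<mu>_def muP_def by (simp add: power2_eq_square)
    next
      case False
      then obtain c where c: "c \<in> e" "c \<in> f" by auto
      have ex: "measure_pmf.expectation M (\<lambda>S. Xe n e S * Xe n f S) = (\<Sum>i\<in>{1..n}. pmf P i ^ card (e \<union> f))"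
        using EXX_int[OF fV ce(2) cf(2) c finP] unfolding M_def by simp
      show ?thesis
      proof (cases "e = f")
        case True
        thus ?thesis using ex ce unfolding Pairs_def \<mu>_def muP_def by simp
      next
        case ne: False
        have "card (e \<union> f) = 3" using card_union3[OF ce(1) cf(1) ne False] .
        thus ?thesis using ex ne False e f unfolding Pairs_def \<gamma>_def gammaP_def by simp
      qed
    qed
  qed
  have EZ2: "measure_pmf.expectation M (\<lambda>S. (Z S)^2)
      = (\<Sum>e\<in>E. \<Sum>f\<in>E. measure_pmf.expectation M (\<lambda>S. Xe n e S * Xe n f S))"
  proof -
    have "(\<lambda>S. (Z S)^2) = (\<lambda>S. \<Sum>e\<in>E. \<Sum>f\<in>E. Xe n e S * Xe n f S)"
      unfolding Z_def by (simp add: power2_eq_square sum_product)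
    hence "measure_pmf.expectation M (\<lambda>S. (Z S)^2) =
        measure_pmf.expectation M (\<lambda>S. \<Sum>e\<in>E. \<Sum>f\<in>E. Xe n e S * Xe n f S)" by simp
    also have "\<dots> = (\<Sum>e\<in>E. measure_pmf.expectation M (\<lambda>S. \<Sum>f\<in>E. Xe n e S * Xe n f S))"
      by (rule Bochner_Integration.integral_sum) (simp add: int)
    also have "\<dots> = (\<Sum>e\<in>E. \<Sum>f\<in>E. measure_pmf.expectation M (\<lambda>S. Xe n e S * Xe n f S))"
      by (intro sum.cong refl Bochner_Integration.integral_sum) (simp add: int)
    finally show ?thesis .
  qed
  have fPairs: "Pairs \<subseteq> E \<times> E" unfolding Pairs_def by auto
  have S1: "(\<Sum>e\<in>E. \<Sum>f\<in>E. of_bool (e = f) * (\<mu> - \<mu>^2)) = real (card E) * (\<mu> - \<mu>^2)"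
  proof -
    have "(\<Sum>f\<in>E. of_bool (e = f) * (\<mu> - \<mu>^2)) = \<mu> - \<mu>^2" if "e \<in> E" for e
    proof -
      have "E \<inter> {f. e = f} = {e}" using that by auto
      thus ?thesis using fE by simp
    qed
    thus ?thesis by simp
  qed
  have S2: "(\<Sum>e\<in>E. \<Sum>f\<in>E. of_bool ((e,f) \<in> Pairs) * (\<gamma> - \<mu>^2)) = real (card Pairs) * (\<gamma> - \<mu>^2)"
  proof -
    have "(\<Sum>e\<in>E. \<Sum>f\<in>E. of_bool ((e,f) \<in> Pairs) * (\<gamma> - \<mu>^2))
        = (\<Sum>x\<in>E \<times> E. of_bool (x \<in> Pairs) * (\<gamma> - \<mu>^2))"
      by (subst sum.cartesian_product) (simp add: case_prod_beta)
    also have "\<dots> = real (card ((E \<times> E) \<inter> {x. x \<in> Pairs})) * (\<gamma> - \<mu>^2)"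
      using fE by simp
    also have "(E \<times> E) \<inter> {x. x \<in> Pairs} = Pairs" using fPairs by auto
    finally show ?thesis .
  qed
  have mu2: "(\<Sum>e\<in>E. \<Sum>f\<in>E. \<mu>^2) = (real (card E) * \<mu>)^2"
    by (simp add: power2_eq_square)
  have Var: "measure_pmf.variance M Z = real (card E) * (\<mu> - \<mu>^2) + real (card Pairs) * (\<gamma> - \<mu>^2)"
  proof -
    have "measure_pmf.variance M Z = measure_pmf.expectation M (\<lambda>S. (Z S)^2) - (measure_pmf.expectation M Z)^2"
      by (rule measure_pmf.variance_eq) (simp_all add: int)
    also have "measure_pmf.expectation M (\<lambda>S. (Z S)^2) = (\<Sum>e\<in>E. \<Sum>f\<in>E. of_bool (e = f) * (\<mu> - \<mu>^2) + of_bool ((e,f) \<in> Pairs) * (\<gamma> - \<mu>^2) + \<mu>^2)"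
      unfolding EZ2 by (intro sum.cong refl EXX)
    also have "\<dots> = (\<Sum>e\<in>E. \<Sum>f\<in>E. of_bool (e = f) * (\<mu> - \<mu>^2)) + (\<Sum>e\<in>E. \<Sum>f\<in>E. of_bool ((e,f) \<in> Pairs) * (\<gamma> - \<mu>^2)) + (\<Sum>e\<in>E. \<Sum>f\<in>E. \<mu>^2)"
      by (simp only: sum.distrib)
    also have "(\<Sum>e\<in>E. \<Sum>f\<in>E. of_bool (e = f) * (\<mu> - \<mu>^2)) + (\<Sum>e\<in>E. \<Sum>f\<in>E. of_bool ((e,f) \<in> Pairs) * (\<gamma> - \<mu>^2)) + (\<Sum>e\<in>E. \<Sum>f\<in>E. \<mu>^2) - (measure_pmf.expectation M Z)^2
       = real (card E) * (\<mu> - \<mu>^2) + real (card Pairs) * (\<gamma> - \<mu>^2) + (real (card E) * \<mu>)^2 - (real (card E) * \<mu>)^2"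
      using mu2 by (simp only: S1 S2 EZ)
    finally show ?thesis by simp
  qed
  have gm: "\<mu>^2 \<le> \<gamma>" unfolding \<mu>_def \<gamma>_def muP_def gammaP_def
    by (rule gamma_bound[OF sum1]) simp
  have "card Pairs \<le> cG V E" unfolding Pairs_def by (rule pairs_le_cG[OF assms(6)])
  hence "real (card Pairs) * (\<gamma> - \<mu>^2) \<le> real (cG V E) * (\<gamma> - \<mu>^2)"
    using gm by (intro mult_right_mono) auto
  have Vle: "measure_pmf.variance M Z \<le> 2 * real (card E) * \<mu>"
  proof -
    have a9: "real (card E) * (\<mu> - \<mu>^2) \<ge> real (cG V E) * (\<gamma> - \<mu>^2)"
      using assms(9) unfolding \<mu>_def \<gamma>_def .
    have d: "real (card E) * (\<mu> - \<mu>^2) = real (card E) * \<mu> - real (card E) * \<mu>^2"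
      by (simp add: right_diff_distrib)
    have "real (card E) * \<mu>^2 \<ge> 0" by simp
    thus ?thesis using Var a9 d \<open>real (card Pairs) * (\<gamma> - \<mu>^2) \<le> real (cG V E) * (\<gamma> - \<mu>^2)\<close> by linarith
  qed
  define \<delta> where "\<delta> = \<mu> - 1 / real n"
  have dl: "\<delta> \<ge> \<epsilon>^2 / real n" unfolding \<delta>_def \<mu>_def muP_def
    by (rule mu_bound[OF assms(1) sum1 _ assms(2)]) (use assms(8) in \<open>simp add: l1_to_uniform_def\<close>)
  have npos: "real n > 0" using assms(1) by simp
  have "\<epsilon>^2 / real n > 0" using npos assms(2) by simp
  hence dpos: "\<delta> > 0" using dl by linarith
  have t: "(1 - \<tau>)^2 > 0" using assms(5) by simp
  have "16 * real n / ((1 - \<tau>)^2 * \<epsilon>^4) > 0" using t assms(2) npos by (intro divide_pos_pos) auto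
  hence Epos: "real (card E) > 0" using assms(10) by linarith
  define D where "D = real (card E) * (1 - \<tau>) * \<delta>"
  have Dpos: "D > 0" unfolding D_def using Epos dpos assms(5) by simp
  have TD: "threshold E n \<tau> \<epsilon> \<le> real (card E) * \<mu> - D"
  proof -
    have "\<tau> * (\<epsilon>^2 / real n) \<le> \<tau> * \<delta>" using dl assms(4) by (intro mult_left_mono) auto
    moreover have "(1 - \<tau>) / real n = 1 / real n - \<tau> / real n" by (simp add: diff_divide_distrib)
    ultimately have "1 / real n + \<tau> * \<epsilon>^2 / real n \<le> \<mu> - (1 - \<tau>) * \<delta>" unfolding \<delta>_def
      by (simp add: algebra_simps)
    hence "real (card E) * (1 / real n + \<tau> * \<epsilon>^2 / real n) \<le> real (card E) * (\<mu> - (1 - \<tau>) * \<delta>)"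
      using Epos by (intro mult_left_mono) auto
    thus ?thesis unfolding threshold_def D_def by (simp add: algebra_simps add_divide_distrib)
  qed
  have "prob_yes V E n \<tau> \<epsilon> P = measure_pmf.prob M ({S. real (collisions E S) < threshold E n \<tau> \<epsilon>} \<inter> set_pmf M)"
    unfolding prob_yes_def M_def by (simp add: measure_Int_set_pmf)
  also have "\<dots> \<le> measure_pmf.prob M {S \<in> space (measure_pmf M). D \<le> \<bar>Z S - measure_pmf.expectation M Z\<bar>}"
  proof (rule measure_pmf.finite_measure_mono)
    show "{S. real (collisions E S) < threshold E n \<tau> \<epsilon>} \<inter> set_pmf M
        \<subseteq> {S \<in> space (measure_pmf M). D \<le> \<bar>Z S - measure_pmf.expectation M Z\<bar>}"
    proof safe
      fix S assume S: "S \<in> set_pmf M" and lt: "real (collisions E S) < threshold E n \<tau> \<epsilon>"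
      have "Z S < real (card E) * \<mu> - D" using coll[OF S] lt TD by linarith
      thus "D \<le> \<bar>Z S - measure_pmf.expectation M Z\<bar>" unfolding EZ by linarith
    qed simp
  qed simp
  also have "\<dots> \<le> measure_pmf.variance M Z / D^2"
    by (rule measure_pmf.Chebyshev_inequality) (simp_all add: int Dpos)
  also have "\<dots> \<le> 2 * real (card E) * \<mu> / D^2"
    using Vle Dpos by (intro divide_right_mono) auto
  also have "\<dots> \<le> 1/4" unfolding D_def
    by (rule final_num[of "real n"]) (use assms(1-3,5,10) dl in \<open>auto simp: \<delta>_def\<close>)
  finally show ?thesis .
qed

end
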